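(* Let $S\subseteq\mathbb{R}^n\times\mathbb{R}^p$ be sign-invariant with respect to $x$, and let $S_0=S\cap(\mathbb{R}^n_+\times\mathbb{R}^p)$. Then $$\mathrm{conv}(S)=\{(x,z)\mid \exists u\in\mathbb{R}^n:\ (u,z)\in\mathrm{conv}(S_0),\ u\ge|x|\},$$ where $|x|$ is the componentwise absolute value and $u\ge|x|$ is componentwise.
   Context: A set $S\subseteq\mathbb{R}^n\times\mathbb{R}^p$ is sign-invariant with respect to $x$ if $(x,z)\in S$ implies $(\bar x,z)\in S$ for every $\bar x\in\mathbb{R}^n$ with $|\bar x|=|x|$ (componentwise absolute values). *)

theory Defs
  imports "HOL-Analysis.Analysis"
begin

definition sign_invariant :: "((real^'n) \<times> (real^'p)) set \<Rightarrow> bool" where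
  "sign_invariant S \<longleftrightarrow>
     (\<forall>x z xb. (x, z) \<in> S \<and> (\<forall>i. \<bar>xb $ i\<bar> = \<bar>x $ i\<bar>) \<longrightarrow> (xb, z) \<in> S)"

end

theory Submission
  imports Defs
begin

lemma box_lemma:
  fixes S :: "((real^'n) \<times> (real^'p)) set"
  assumes si: "sign_invariant S" and yS: "(y,w) \<in> S" and y0: "\<forall>i. 0 \<le> y$i"
  shows "\<forall>r::real^'n. (\<forall>i. \<bar>r$i\<bar> \<le> 1) \<longrightarrow> ((\<chi> j. r$j * y$j), w) \<in> convex hull S"
proof -
  have "\<forall>r::real^'n. (\<forall>i. \<bar>r$i\<bar> \<le> 1) \<and> (\<forall>i. i \<notin> I \<longrightarrow> \<bar>r$i\<bar> = 1)
          \<longrightarrow> ((\<chi> j. r$j * y$j), w) \<in> convex hull S" if "finite I" for I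
    using that
  proof (induction I rule: finite_induct)
    case empty
    show ?case
    proof (intro allI impI)
      fix r :: "real^'n"
      assume "(\<forall>i. \<bar>r$i\<bar> \<le> 1) \<and> (\<forall>i. i \<notin> {} \<longrightarrow> \<bar>r$i\<bar> = 1)"
      then have r1: "\<And>i. \<bar>r$i\<bar> = 1" by auto
      have "\<forall>i. \<bar>(\<chi> j. r$j * y$j) $ i\<bar> = \<bar>y $ i\<bar>"
        using r1 by (simp add: abs_mult)
      then have "((\<chi> j. r$j * y$j), w) \<in> S"
        using si yS unfolding sign_invariant_def by blast
      then show "((\<chi> j. r$j * y$j), w) \<in> convex hull S" by (rule hull_inc)
    qed
  next
    case (insert i I)
    show ?case
    proof (intro allI impI)
      fix r :: "real^'n"
      assume A: "(\<forall>i. \<bar>r$i\<bar> \<le> 1) \<and> (\<forall>k. k \<notin> insert i I \<longrightarrow> \<bar>r$k\<bar> = 1)"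
      define r1 :: "real^'n" where "r1 = (\<chi> j. if j = i then 1 else r$j)"
      define r2 :: "real^'n" where "r2 = (\<chi> j. if j = i then -1 else r$j)"
      have h1: "((\<chi> j. r1$j * y$j), w) \<in> convex hull S"
        using insert.IH[rule_format, of r1] A unfolding r1_def by auto
      have h2: "((\<chi> j. r2$j * y$j), w) \<in> convex hull S"
        using insert.IH[rule_format, of r2] A unfolding r2_def by auto
      define a where "a = (1 + r$i)/2"
      define b where "b = (1 - r$i)/2"
      have ri: "\<bar>r$i\<bar> \<le> 1" using A by auto
      have a0: "a \<ge> 0" "b \<ge> 0" "a + b = 1" using ri unfolding a_def b_def by (auto simp: field_simps)
      have "a *\<^sub>R ((\<chi> j. r1$j * y$j), w) + b *\<^sub>R ((\<chi> j. r2$j * y$j), w) \<in> convex hull S"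
        by (rule convexD[OF convex_convex_hull h1 h2 a0])
      moreover have "a *\<^sub>R ((\<chi> j. r1$j * y$j), w) + b *\<^sub>R ((\<chi> j. r2$j * y$j), w)
          = ((\<chi> j. r$j * y$j), w)"
      proof -
        have "a *\<^sub>R (\<chi> j. r1$j * y$j) + b *\<^sub>R (\<chi> j. r2$j * y$j) = (\<chi> j. r$j * y$j)"
        proof (rule vec_eq_iff[THEN iffD2], rule allI)
          fix j
          show "(a *\<^sub>R (\<chi> j. r1$j * y$j) + b *\<^sub>R (\<chi> j. r2$j * y$j)) $ j = (\<chi> j. r$j * y$j) $ j"
          proof (cases "j = i")
            case True
            then show ?thesis unfolding r1_def r2_def a_def b_def
              by (simp add: field_simps)
          next
            case False
            then have "a * (r $ j * y $ j) + b * (r $ j * y $ j) = r $ j * y $ j"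
              using a0(3) by (metis distrib_right mult_1)
            then show ?thesis using False unfolding r1_def r2_def by simp
          qed
        qed
        moreover have "a *\<^sub>R w + b *\<^sub>R w = w" using a0(3)
          by (metis scaleR_add_left scaleR_one)
        ultimately show ?thesis by simp
      qed
      ultimately show "((\<chi> j. r$j * y$j), w) \<in> convex hull S" by simp
    qed
  qed
  from this[OF finite_class.finite_UNIV] show ?thesis by auto
qed

theorem theorem3:
  fixes S :: "((real^'n) \<times> (real^'p)) set"
  assumes "sign_invariant S"
  shows "convex hull S =
    {(x, z). \<exists>u :: real^'n.
       (u, z) \<in> convex hull (S \<inter> {(y, w). \<forall>i. 0 \<le> y $ i}) \<and>
       (\<forall>i. \<bar>x $ i\<bar> \<le> u $ i)}"
  (is "_ = ?R")
proof
  let ?C = "convex hull (S \<inter> {(y, w). \<forall>i. 0 \<le> y $ i})"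
  show "convex hull S \<subseteq> ?R"
  proof (rule hull_minimal)
    show "S \<subseteq> ?R"
    proof
      fix p assume "p \<in> S"
      then obtain x z where p: "p = (x,z)" "(x,z) \<in> S" by (cases p) auto
      define u :: "real^'n" where "u = (\<chi> j. \<bar>x$j\<bar>)"
      have "(u, z) \<in> S" using assms p(2) unfolding sign_invariant_def u_def
        by (metis (no_types, lifting) abs_idempotent vec_lambda_beta)
      then have "(u,z) \<in> ?C" by (intro hull_inc) (auto simp: u_def)
      then show "p \<in> ?R" using p by (auto simp: u_def)
    qed
    show "convex ?R"
    proof (rule convexI)
      fix p q and a b :: real
      assume p: "p \<in> ?R" and q: "q \<in> ?R" and ab: "0 \<le> a" "0 \<le> b" "a + b = 1"
      obtain x1 z1 u1 where 1: "p = (x1,z1)" "(u1,z1) \<in> ?C" "\<forall>i. \<bar>x1 $ i\<bar> \<le> u1 $ i"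
        using p by auto
      obtain x2 z2 u2 where 2: "q = (x2,z2)" "(u2,z2) \<in> ?C" "\<forall>i. \<bar>x2 $ i\<bar> \<le> u2 $ i"
        using q by auto
      have "a *\<^sub>R (u1,z1) + b *\<^sub>R (u2,z2) \<in> ?C"
        by (rule convexD[OF convex_convex_hull 1(2) 2(2) ab])
      then have C: "(a *\<^sub>R u1 + b *\<^sub>R u2, a *\<^sub>R z1 + b *\<^sub>R z2) \<in> ?C" by simp
      have "\<forall>i. \<bar>(a *\<^sub>R x1 + b *\<^sub>R x2) $ i\<bar> \<le> (a *\<^sub>R u1 + b *\<^sub>R u2) $ i"
      proof
        fix i
        have "\<bar>a * x1$i + b * x2$i\<bar> \<le> a * \<bar>x1$i\<bar> + b * \<bar>x2$i\<bar>"
          using ab by (metis abs_mult abs_of_nonneg abs_triangle_ineq)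
        also have "\<dots> \<le> a * u1$i + b * u2$i"
          using ab 1(3) 2(3) by (meson add_mono mult_left_mono)
        finally show "\<bar>(a *\<^sub>R x1 + b *\<^sub>R x2) $ i\<bar> \<le> (a *\<^sub>R u1 + b *\<^sub>R u2) $ i" by simp
      qed
      then show "a *\<^sub>R p + b *\<^sub>R q \<in> ?R" using C 1 2 by auto
    qed
  qed
  show "?R \<subseteq> convex hull S"
  proof
    fix p assume "p \<in> ?R"
    then obtain x z u where p: "p = (x,z)" "(u,z) \<in> ?C" and xu: "\<forall>i. \<bar>x $ i\<bar> \<le> u $ i"
      by auto
    define r :: "real^'n" where "r = (\<chi> j. if u$j = 0 then 0 else x$j / u$j)"
    have rb: "\<forall>i. \<bar>r$i\<bar> \<le> 1"
    proof
      fix i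
      show "\<bar>r$i\<bar> \<le> 1"
      proof (cases "u$i = 0")
        case False
        then have "u$i > 0" using xu[rule_format, of i] by linarith
        then show ?thesis using xu[rule_format, of i] False
          by (simp add: r_def abs_divide divide_le_eq_1)
      qed (simp add: r_def)
    qed
    have xr: "x = (\<chi> j. r$j * u$j)"
    proof (rule vec_eq_iff[THEN iffD2], rule allI)
      fix j
      show "x $ j = (\<chi> j. r$j * u$j) $ j"
        using xu[rule_format, of j] by (auto simp: r_def)
    qed
    let ?D = "{(y,w). ((\<chi> j. r$j * y$j), w) \<in> convex hull S}"
    have "?C \<subseteq> ?D"
    proof (rule hull_minimal)
      show "S \<inter> {(y, w). \<forall>i. 0 \<le> y $ i} \<subseteq> ?D"
        using box_lemma[OF assms] rb by auto
      show "convex ?D"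
      proof (rule convexI)
        fix p q and a b :: real
        assume p: "p \<in> ?D" and q: "q \<in> ?D" and ab: "0 \<le> a" "0 \<le> b" "a + b = 1"
        obtain y1 w1 where 1: "p = (y1,w1)" "((\<chi> j. r$j * y1$j), w1) \<in> convex hull S"
          using p by auto
        obtain y2 w2 where 2: "q = (y2,w2)" "((\<chi> j. r$j * y2$j), w2) \<in> convex hull S"
          using q by auto
        have "a *\<^sub>R ((\<chi> j. r$j * y1$j), w1) + b *\<^sub>R ((\<chi> j. r$j * y2$j), w2) \<in> convex hull S"
          by (rule convexD[OF convex_convex_hull 1(2) 2(2) ab])
        moreover have "a *\<^sub>R (\<chi> j. r$j * y1$j) + b *\<^sub>R (\<chi> j. r$j * y2$j)
            = (\<chi> j. r$j * (a *\<^sub>R y1 + b *\<^sub>R y2)$j)"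
          by (simp add: vec_eq_iff algebra_simps)
        ultimately show "a *\<^sub>R p + b *\<^sub>R q \<in> ?D" using 1 2 by simp
      qed
    qed
    then show "p \<in> convex hull S" using p xr by auto
  qed
qed

end
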